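(* For each quantile level $\alpha$, let $q_t^{\alpha}=b_t^{\alpha}+\theta_t^{\alpha}$ be the Quantile Tracker iterate obtained via $\theta_{t+1}^{\alpha}=\theta_t^{\alpha}-\eta(\mathbb{1}\{y_t\le q_t^{\alpha}\}-\alpha)$ from any initial offset $\theta_1^{\alpha}$ and learning rate $\eta>0$, and let $[\hat q_t^{\alpha_1},\dots,\hat q_t^{\alpha_{|\mathcal{A}|}}]=m([q_t^{\alpha_1},\dots,q_t^{\alpha_{|\mathcal{A}|}}])$, where $m:\mathbb{R}^{|\mathcal{A}|}\to\mathbb{R}^{|\mathcal{A}|}$ produces a vector with nondecreasing entries. For both $m=\textsc{Sort}$ and $m=\Pi_{\mathcal{K}}$, there exist a set of levels $\mathcal{A}$ and a sequence $(y_t,b_t)$ with $|y_t-b_t^{\alpha}|<R$ for all $\alpha,t$ (for some $R>0$) such that for some $\alpha\in\mathcal{A}$, $\lim_{T\to\infty}\frac1T\sum_{t=1}^T\mathbb{1}\{y_t\le\hat q_t^{\alpha}\}\ne\alpha$.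
   Context: $\mathcal{A}=\{\alpha_1<\dots<\alpha_{|\mathcal{A}|}\}\subset(0,1)$ is a set of quantile levels; base forecasts $b_t\in\mathcal{K}$ where $\mathcal{K}=\{x\in\mathbb{R}^{|\mathcal{A}|}:x_1\le\dots\le x_{|\mathcal{A}|}\}$. $\textsc{Sort}(v)$ is the vector whose $i$-th entry is the $i$-th smallest entry of $v$; $\Pi_{\mathcal{K}}$ is Euclidean projection onto $\mathcal{K}$ (isotonic regression). *)

theory Defs
  imports "HOL-Analysis.Analysis"
begin

text \<open>Vectors in R^{|A|} are represented as real lists of length |A|; the i-th entry
  corresponds to the i-th smallest level alphas ! i.  Time is 0-indexed internally:
  index t here corresponds to time t+1 of the paper.\<close>

definition mono_cone :: "nat \<Rightarrow> real list set" where
  "mono_cone n = {x. length x = n \<and> sorted x}"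

definition sq_dist :: "real list \<Rightarrow> real list \<Rightarrow> real" where
  "sq_dist x z = (\<Sum>i<length x. (x ! i - z ! i)^2)"

definition sort_vec :: "real list \<Rightarrow> real list" where
  "sort_vec v = sort v"

definition iso_proj :: "real list \<Rightarrow> real list" where
  "iso_proj v = (THE z. z \<in> mono_cone (length v) \<and>
                   (\<forall>w \<in> mono_cone (length v). sq_dist v z \<le> sq_dist v w))"

fun qt_offset :: "real list \<Rightarrow> real \<Rightarrow> (real \<Rightarrow> real) \<Rightarrow> (nat \<Rightarrow> real) \<Rightarrow> (nat \<Rightarrow> real list)
                   \<Rightarrow> nat \<Rightarrow> real list" where
  "qt_offset alphas eta th1 y b 0 = map th1 alphas"
| "qt_offset alphas eta th1 y b (Suc t) =
     (let th = qt_offset alphas eta th1 y b t in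
      map (\<lambda>i. th ! i - eta * ((if y t \<le> b t ! i + th ! i then 1 else 0) - alphas ! i))
          [0..<length alphas])"

definition qt_iter :: "real list \<Rightarrow> real \<Rightarrow> (real \<Rightarrow> real) \<Rightarrow> (nat \<Rightarrow> real) \<Rightarrow> (nat \<Rightarrow> real list)
                   \<Rightarrow> nat \<Rightarrow> real list" where
  "qt_iter alphas eta th1 y b t =
     map (\<lambda>i. b t ! i + qt_offset alphas eta th1 y b t ! i) [0..<length alphas]"

definition qt_post :: "(real list \<Rightarrow> real list) \<Rightarrow> real list \<Rightarrow> real \<Rightarrow> (real \<Rightarrow> real)
                   \<Rightarrow> (nat \<Rightarrow> real) \<Rightarrow> (nat \<Rightarrow> real list) \<Rightarrow> nat \<Rightarrow> real list" where
  "qt_post m alphas eta th1 y b t = m (qt_iter alphas eta th1 y b t)"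

end

theory Submission
  imports Defs
begin

fun xs :: "real \<Rightarrow> real \<Rightarrow> real \<Rightarrow> nat \<Rightarrow> real" where
  "xs eta S x0 0 = x0"
| "xs eta S x0 (Suc t) = (if 2 * xs eta S x0 t - S > 0 then xs eta S x0 t - 3*eta/4 else xs eta S x0 t + eta/4)"

definition bb :: "real \<Rightarrow> real \<Rightarrow> real \<Rightarrow> nat \<Rightarrow> real list" where
  "bb eta S x0 t = (let x = xs eta S x0 t in
     if 2 * x - S > 0 then [-x, -x] else [x - S - 1, x - S])"

lemma len2: assumes "length w = 2" obtains w1 w2 where "w = [w1, w2]"
  using assms by (metis One_nat_def Suc_1 length_0_conv length_Suc_conv)

lemma sq_dist2: "sq_dist [p,q] [z1,z2] = (p-z1)^2 + (q-z2)^2"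
  by (simp add: sq_dist_def numeral_2_eq_2 lessThan_Suc)

lemma iso2_sorted: assumes "p \<le> q" shows "iso_proj [p,q] = [p,q]"
  unfolding iso_proj_def
proof (rule the_equality)
  show "[p, q] \<in> mono_cone (length [p, q]) \<and> (\<forall>w\<in>mono_cone (length [p, q]). sq_dist [p, q] [p, q] \<le> sq_dist [p, q] w)"
  proof (intro conjI ballI)
    show "[p, q] \<in> mono_cone (length [p, q])" using assms by (simp add: mono_cone_def)
    fix w assume "w \<in> mono_cone (length [p, q])"
    then have "length w = 2" by (simp add: mono_cone_def)
    then obtain w1 w2 where "w = [w1,w2]" by (rule len2)
    then show "sq_dist [p, q] [p, q] \<le> sq_dist [p, q] w" by (simp add: sq_dist2)
  qed
next
  fix z assume z: "z \<in> mono_cone (length [p, q]) \<and> (\<forall>w\<in>mono_cone (length [p, q]). sq_dist [p, q] z \<le> sq_dist [p, q] w)"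
  then have "length z = 2" by (simp add: mono_cone_def)
  then obtain z1 z2 where zz: "z = [z1,z2]" by (rule len2)
  have "[p,q] \<in> mono_cone (length [p, q])" using assms by (simp add: mono_cone_def)
  with z have "sq_dist [p, q] z \<le> sq_dist [p, q] [p,q]" by blast
  then have "(p-z1)^2 + (q-z2)^2 \<le> 0" by (simp add: zz sq_dist2)
  then have "(p-z1)^2 = 0" "(q-z2)^2 = 0" by (smt (verit) zero_le_power2)+
  then have "z1 = p" "z2 = q" by simp_all
  then show "z = [p,q]" using zz by simp
qed

lemma iso2_cross: assumes "q < p" shows "iso_proj [p,q] = [(p+q)/2, (p+q)/2]"
  unfolding iso_proj_def
proof (rule the_equality)
  let ?m = "(p+q)/2"
  have key: "(p-w1)^2 + (q-w2)^2 = (p-?m)^2 + (q-?m)^2 + (?m-w1)^2 + (?m-w2)^2 + (p-q)*(w2-w1)" for w1 w2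
    by (simp add: power2_eq_square field_simps)
  show "[?m, ?m] \<in> mono_cone (length [p, q]) \<and> (\<forall>w\<in>mono_cone (length [p, q]). sq_dist [p, q] [?m, ?m] \<le> sq_dist [p, q] w)"
  proof (intro conjI ballI)
    show "[?m, ?m] \<in> mono_cone (length [p, q])" by (simp add: mono_cone_def)
    fix w assume "w \<in> mono_cone (length [p, q])"
    then have "length w = 2" "sorted w" by (auto simp add: mono_cone_def)
    moreover obtain w1 w2 where ww: "w = [w1,w2]" using \<open>length w = 2\<close> by (rule len2)
    ultimately have "w1 \<le> w2" by simp
    have "0 \<le> (p-q)*(w2-w1)" using assms \<open>w1 \<le> w2\<close> by simp
    then show "sq_dist [p, q] [?m, ?m] \<le> sq_dist [p, q] w" unfolding ww sq_dist2 key[of w1 w2]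
      by (smt (verit) zero_le_power2)
  qed
next
  let ?m = "(p+q)/2"
  have key: "(p-w1)^2 + (q-w2)^2 = (p-?m)^2 + (q-?m)^2 + (?m-w1)^2 + (?m-w2)^2 + (p-q)*(w2-w1)" for w1 w2
    by (simp add: power2_eq_square field_simps)
  fix z assume z: "z \<in> mono_cone (length [p, q]) \<and> (\<forall>w\<in>mono_cone (length [p, q]). sq_dist [p, q] z \<le> sq_dist [p, q] w)"
  then have "length z = 2" "sorted z" by (auto simp add: mono_cone_def)
  moreover obtain z1 z2 where zz: "z = [z1,z2]" using \<open>length z = 2\<close> by (rule len2)
  ultimately have "z1 \<le> z2" by simp
  have "[?m,?m] \<in> mono_cone (length [p, q])" by (simp add: mono_cone_def)
  with z have "sq_dist [p, q] z \<le> sq_dist [p, q] [?m,?m]" by blast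
  then have "(p-z1)^2 + (q-z2)^2 \<le> (p-?m)^2 + (q-?m)^2" by (simp add: zz sq_dist2)
  then have "(?m-z1)^2 + (?m-z2)^2 + (p-q)*(z2-z1) \<le> 0" unfolding key[of z1 z2] by simp
  moreover have "0 \<le> (p-q)*(z2-z1)" using assms \<open>z1 \<le> z2\<close> by simp
  ultimately have "(?m-z1)^2 + (?m-z2)^2 \<le> 0" by linarith
  then have "(?m-z1)^2 = 0" "(?m-z2)^2 = 0" by (smt (verit) zero_le_power2)+
  then have "z1 = ?m" "z2 = ?m" by simp_all
  then show "z = [?m,?m]" using zz by simp
qed

lemma offset_eq:
  "qt_offset [1/4, 3/4] eta th1 (\<lambda>t. 0) (bb eta (th1 (1/4) + th1 (3/4)) (th1 (1/4)))  t
   = [xs eta (th1 (1/4) + th1 (3/4)) (th1 (1/4)) t, (th1 (1/4) + th1 (3/4)) - xs eta (th1 (1/4) + th1 (3/4)) (th1 (1/4)) t]"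
proof (induction t)
  case 0
  then show ?case by simp
next
  case (Suc t)
  show ?case
    apply (simp only: qt_offset.simps(2) Suc.IH)
    apply (simp add: Let_def bb_def upt_conv_Cons numeral_2_eq_2)
    done
qed

lemma xs_bound:
  assumes "eta > 0"
  shows "min x0 (S/2 - eta) \<le> xs eta S x0 t \<and> xs eta S x0 t \<le> max x0 (S/2 + eta)"
  using assms by (induction t) auto

lemma iter_eq:
  fixes th1 :: "real \<Rightarrow> real"
  defines "S \<equiv> th1 (1/4) + th1 (3/4)"
  shows "qt_iter [1/4, 3/4] eta th1 (\<lambda>t. 0) (bb eta S (th1 (1/4))) t
    = (if 2 * xs eta S (th1 (1/4)) t - S > 0 then [0, S - 2 * xs eta S (th1 (1/4)) t]
       else [2 * xs eta S (th1 (1/4)) t - S - 1, 0])"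
  unfolding qt_iter_def S_def offset_eq
  by (simp add: bb_def Let_def upt_conv_Cons numeral_2_eq_2)

lemma post_neg:
  fixes th1 :: "real \<Rightarrow> real"
  assumes "m \<in> {sort_vec, iso_proj}"
  defines "S \<equiv> th1 (1/4) + th1 (3/4)"
  shows "qt_post m [1/4, 3/4] eta th1 (\<lambda>t. 0) (bb eta S (th1 (1/4))) t ! 0 < 0"
  using assms unfolding qt_post_def S_def iter_eq
  by (auto simp: sort_vec_def iso2_sorted iso2_cross)

theorem proposition2:
  shows "\<forall>m \<in> {sort_vec, iso_proj}. \<forall>eta::real. eta > 0 \<longrightarrow> (\<forall>th1 :: real \<Rightarrow> real.
     \<exists>(alphas :: real list) (y :: nat \<Rightarrow> real) (b :: nat \<Rightarrow> real list) (R :: real).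
       sorted_wrt (<) alphas \<and> (\<forall>a \<in> set alphas. 0 < a \<and> a < 1) \<and>
       (\<forall>t. b t \<in> mono_cone (length alphas)) \<and>
       R > 0 \<and> (\<forall>t. \<forall>i < length alphas. \<bar>y t - b t ! i\<bar> < R) \<and>
       (\<exists>i < length alphas.
          \<not> ((\<lambda>T. (\<Sum>t<T. if y t \<le> qt_post m alphas eta th1 y b t ! i then 1 else 0) / real T)
               \<longlonglongrightarrow> alphas ! i)))"
proof (intro ballI allI impI)
  fix m and eta :: real and th1 :: "real \<Rightarrow> real"
  assume m: "m \<in> {sort_vec, iso_proj}" and eta: "eta > 0"
  define S where "S = th1 (1/4) + th1 (3/4)"
  define x0 where "x0 = th1 (1/4)"
  define R where "R = \<bar>x0\<bar> + 2 * \<bar>S\<bar> + eta + 2"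
  let ?b = "bb eta S x0"
  have mono: "\<forall>t. ?b t \<in> mono_cone (length [1/4, 3/4::real])"
    by (auto simp: bb_def Let_def mono_cone_def)
  have bnd: "\<forall>t. \<forall>i < length [1/4, 3/4::real]. \<bar>(0::real) - ?b t ! i\<bar> < R"
  proof (intro allI impI)
    fix t i assume i: "i < length [1/4, 3/4::real]"
    have xb: "\<bar>xs eta S x0 t\<bar> \<le> \<bar>x0\<bar> + \<bar>S\<bar> + eta"
      using xs_bound[OF eta, of x0 S t] eta by (simp add: min_def max_def split: if_splits; linarith)
    have "i = 0 \<or> i = 1" using i by auto
    then show "\<bar>(0::real) - ?b t ! i\<bar> < R"
      using xb eta unfolding R_def bb_def Let_def by (auto split: if_splits)
  qed
  have h: "\<not> (0::real) \<le> qt_post m [1/4, 3/4] eta th1 (\<lambda>t. 0) ?b t ! 0" for t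
    using post_neg[OF m] unfolding S_def x0_def by (simp add: not_le)
  have zero: "(\<lambda>T. (\<Sum>t<T. if (0::real) \<le> qt_post m [1/4, 3/4] eta th1 (\<lambda>t. 0) ?b t ! 0 then 1 else 0) / real T) = (\<lambda>T. 0)"
    using h by simp
  have nt: "\<not> ((\<lambda>T. 0::real) \<longlonglongrightarrow> 1/4)"
    using LIMSEQ_unique[OF tendsto_const] by fastforce
  show "\<exists>(alphas :: real list) (y :: nat \<Rightarrow> real) (b :: nat \<Rightarrow> real list) (R :: real).
       sorted_wrt (<) alphas \<and> (\<forall>a \<in> set alphas. 0 < a \<and> a < 1) \<and>
       (\<forall>t. b t \<in> mono_cone (length alphas)) \<and>
       R > 0 \<and> (\<forall>t. \<forall>i < length alphas. \<bar>y t - b t ! i\<bar> < R) \<and>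
       (\<exists>i < length alphas.
          \<not> ((\<lambda>T. (\<Sum>t<T. if y t \<le> qt_post m alphas eta th1 y b t ! i then 1 else 0) / real T)
               \<longlonglongrightarrow> alphas ! i))"
    apply (rule exI[of _ "[1/4, 3/4]"], rule exI[of _ "\<lambda>t. 0"], rule exI[of _ ?b], rule exI[of _ R])
    using mono bnd zero nt eta unfolding R_def by auto
qed

end
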